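(* Let $D$ be an $m\times m$ differential matrix over a field and let $B_1,B_2$ be $m\times m$ triangular matrices. If both $\underline D_1=B_1^{-1}DB_1$ and $\underline D_2=B_2^{-1}DB_2$ are almost-Jordan, then $\underline D_1=\underline D_2$.
   Context: A differential matrix is a square matrix $D$ with $D^2=0$. A square matrix is triangular if it is upper-triangular and invertible. A differential matrix is Jordan if it is block-diagonal with each diagonal block equal to $[0]$ or $\begin{bmatrix}0&1\\0&0\end{bmatrix}$; it is almost-Jordan if $P^{-1}\underline DP$ is Jordan for some permutation matrix $P$. *)

theory Defs
  imports "Jordan_Normal_Form.Matrix" "HOL-Combinatorics.Permutations"
begin

definition mat_inv :: "'a::field mat \<Rightarrow> 'a mat" where
  "mat_inv A = (THE B. inverts_mat A B \<and> inverts_mat B A)"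

definition differential_mat :: "'a::field mat \<Rightarrow> bool" where
  "differential_mat D \<longleftrightarrow> square_mat D \<and> D * D = 0\<^sub>m (dim_row D) (dim_col D)"

definition triangular_mat :: "'a::field mat \<Rightarrow> bool" where
  "triangular_mat B \<longleftrightarrow> upper_triangular B \<and> invertible_mat B"

definition jblock2 :: "'a::field mat" where
  "jblock2 = mat 2 2 (\<lambda>(i,j). if i = 0 \<and> j = 1 then 1 else 0)"

definition jordan_diff :: "'a::field mat \<Rightarrow> bool" where
  "jordan_diff J \<longleftrightarrow> (\<exists>bs. set bs \<subseteq> {0\<^sub>m 1 1, jblock2} \<and> J = diag_block_mat bs)"

definition perm_mat :: "nat \<Rightarrow> (nat \<Rightarrow> nat) \<Rightarrow> 'a::field mat" where
  "perm_mat m \<sigma> = mat m m (\<lambda>(i,j). if i = \<sigma> j then 1 else 0)"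

definition almost_jordan :: "'a::field mat \<Rightarrow> bool" where
  "almost_jordan D \<longleftrightarrow> (\<exists>\<sigma>. \<sigma> permutes {..<dim_row D} \<and>
      (let P = perm_mat (dim_row D) \<sigma> in jordan_diff (mat_inv P * D * P)))"

end

theory Submission
  imports Defs "Jordan_Normal_Form.Determinant"
begin

definition pp :: "'a::field mat \<Rightarrow> bool" where
  "pp J \<longleftrightarrow> (\<forall>i<dim_row J. \<forall>j<dim_col J. J$$(i,j) = 0 \<or> J$$(i,j) = 1) \<and>
     (\<forall>i<dim_row J. \<forall>j<dim_col J. \<forall>j'<dim_col J. J$$(i,j) \<noteq> 0 \<longrightarrow> J$$(i,j') \<noteq> 0 \<longrightarrow> j = j') \<and>
     (\<forall>i<dim_row J. \<forall>i'<dim_row J. \<forall>j<dim_col J. J$$(i,j) \<noteq> 0 \<longrightarrow> J$$(i',j) \<noteq> 0 \<longrightarrow> i = i')"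

lemma sum_single:
  assumes "finite S" "a \<in> S" "\<And>k. k \<in> S \<Longrightarrow> k \<noteq> a \<Longrightarrow> f k = 0"
  shows "sum f S = f a"
proof -
  have "sum f S = f a + sum f (S - {a})" using assms sum.remove by metis
  also have "sum f (S - {a}) = 0" using assms by (intro sum.neutral) auto
  finally show ?thesis by simp
qed

lemma mult_index:
  assumes "A \<in> carrier_mat n k" "B \<in> carrier_mat k p" "i < n" "j < p"
  shows "(A * B) $$ (i,j) = (\<Sum>l\<in>{0..<k}. A $$ (i,l) * B $$ (l,j))"
  using assms by (auto simp: index_mult_mat scalar_prod_def intro!: sum.cong)

lemma pp_zero11: "pp (0\<^sub>m 1 1 :: 'a::field mat)"
  unfolding pp_def by auto

lemma pp_jblock2: "pp (jblock2 :: 'a::field mat)"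
  unfolding pp_def jblock2_def
  by (auto simp: less_2_cases_iff)

lemma four_nz:
  fixes A R :: "'a::field mat"
  assumes "i < dim_row A + dim_row R" "j < dim_col A + dim_col R"
  shows "four_block_mat A (0\<^sub>m (dim_row A) (dim_col R)) (0\<^sub>m (dim_row R) (dim_col A)) R $$ (i,j) =
    (if i < dim_row A \<and> j < dim_col A then A $$ (i,j)
     else if \<not> i < dim_row A \<and> \<not> j < dim_col A then R $$ (i - dim_row A, j - dim_col A) else 0)"
  using assms by (simp add: index_mat_four_block)

lemma pp_four:
  assumes "pp A" "pp R"
  shows "pp (four_block_mat A (0\<^sub>m (dim_row A) (dim_col R)) (0\<^sub>m (dim_row R) (dim_col A)) R)"
  unfolding pp_def index_mat_four_block(2,3)
proof (intro conjI allI impI)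
  fix i j assume "i < dim_row A + dim_row R" "j < dim_col A + dim_col R"
  then show "four_block_mat A (0\<^sub>m (dim_row A) (dim_col R)) (0\<^sub>m (dim_row R) (dim_col A)) R $$ (i,j) = 0 \<or>
    four_block_mat A (0\<^sub>m (dim_row A) (dim_col R)) (0\<^sub>m (dim_row R) (dim_col A)) R $$ (i,j) = 1"
  proof -
    have "\<not> i < dim_row A \<Longrightarrow> i - dim_row A < dim_row R" "\<not> j < dim_col A \<Longrightarrow> j - dim_col A < dim_col R"
      using \<open>i < _\<close> \<open>j < _\<close> by arith+
    then show ?thesis using assms \<open>i < _\<close> \<open>j < _\<close> unfolding pp_def four_nz[OF \<open>i < _\<close> \<open>j < _\<close>] by auto
  qed
next
  fix i j j' assume h: "i < dim_row A + dim_row R" "j < dim_col A + dim_col R" "j' < dim_col A + dim_col R"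
    "four_block_mat A (0\<^sub>m (dim_row A) (dim_col R)) (0\<^sub>m (dim_row R) (dim_col A)) R $$ (i,j) \<noteq> 0"
    "four_block_mat A (0\<^sub>m (dim_row A) (dim_col R)) (0\<^sub>m (dim_row R) (dim_col A)) R $$ (i,j') \<noteq> 0"
  from h(4,5) show "j = j'"
    unfolding four_nz[OF h(1) h(2)] four_nz[OF h(1) h(3)]
  proof (simp split: if_splits, goal_cases)
    case 1 then show ?case using assms(1) h(1-3) unfolding pp_def by auto
  next
    case 2
    have "i - dim_row A < dim_row R" "j - dim_col A < dim_col R" "j' - dim_col A < dim_col R"
      using 2 h(1-3) by arith+
    then have "j - dim_col A = j' - dim_col A" using 2 assms(2) unfolding pp_def by blast
    then show ?case using 2 by arith
  qed
next
  fix i i' j assume h: "i < dim_row A + dim_row R" "i' < dim_row A + dim_row R" "j < dim_col A + dim_col R"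
    "four_block_mat A (0\<^sub>m (dim_row A) (dim_col R)) (0\<^sub>m (dim_row R) (dim_col A)) R $$ (i,j) \<noteq> 0"
    "four_block_mat A (0\<^sub>m (dim_row A) (dim_col R)) (0\<^sub>m (dim_row R) (dim_col A)) R $$ (i',j) \<noteq> 0"
  from h(4,5) show "i = i'"
    unfolding four_nz[OF h(1) h(3)] four_nz[OF h(2) h(3)]
  proof (simp split: if_splits, goal_cases)
    case 1 then show ?case using assms(1) h(1-3) unfolding pp_def by auto
  next
    case 2
    have "i - dim_row A < dim_row R" "i' - dim_row A < dim_row R" "j - dim_col A < dim_col R"
      using 2 h(1-3) by arith+
    then have "i - dim_row A = i' - dim_row A" using 2 assms(2) unfolding pp_def by blast
    then show ?case using 2 by arith
  qed
qed
lemma pp_diag: "set bs \<subseteq> {0\<^sub>m 1 1, jblock2} \<Longrightarrow> pp (diag_block_mat (bs :: 'a::field mat list))"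
proof (induction bs)
  case Nil
  then show ?case unfolding pp_def by simp
next
  case (Cons A bs)
  then have "A \<in> {0\<^sub>m 1 1, jblock2}" by simp
  then have A: "pp A" using pp_zero11 pp_jblock2 by blast
  have R: "pp (diag_block_mat bs)" using Cons by simp
  show ?case unfolding diag_block_mat.simps Let_def by (rule pp_four[OF A R])
qed

lemma mat_inv_eq:
  fixes A B :: "'a::field mat"
  assumes A: "A \<in> carrier_mat n n" and ab: "inverts_mat A B" and ba: "inverts_mat B A"
  shows "mat_inv A = B"
proof -
  have dims: "X \<in> carrier_mat n n" if "inverts_mat A X" "inverts_mat X A" for X
  proof -
    have "dim_col (A * X) = n" using that(1) A unfolding inverts_mat_def by simp
    moreover have "dim_col (X * A) = dim_row X" using that(2) unfolding inverts_mat_def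
      by (metis index_one_mat(3))
    ultimately show ?thesis using A by auto
  qed
  have uniq: "X = B" if "inverts_mat A X" "inverts_mat X A" for X
  proof -
    have X: "X \<in> carrier_mat n n" and B: "B \<in> carrier_mat n n" using dims that ab ba by auto
    have "X = X * (A * B)" using ab A X B unfolding inverts_mat_def by simp
    also have "\<dots> = (X * A) * B" using A X B by (simp add: assoc_mult_mat)
    also have "\<dots> = B" using that(2) X B unfolding inverts_mat_def by simp
    finally show ?thesis .
  qed
  show ?thesis unfolding mat_inv_def
  proof (rule the_equality)
    show "inverts_mat A B \<and> inverts_mat B A" using ab ba by blast
  next
    fix X assume "inverts_mat A X \<and> inverts_mat X A"
    then show "X = B" using uniq by blast
  qed
qed

lemma perm_facts:
  fixes E :: "'a::field mat"
  assumes s: "\<sigma> permutes {..<m}" and E: "E \<in> carrier_mat m m"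
  shows "mat_inv (perm_mat m \<sigma> :: 'a mat) * E * perm_mat m \<sigma> \<in> carrier_mat m m"
    and "\<And>i j. i < m \<Longrightarrow> j < m \<Longrightarrow> (mat_inv (perm_mat m \<sigma> :: 'a mat) * E * perm_mat m \<sigma>) $$ (i,j) = E $$ (\<sigma> i, \<sigma> j)"
proof -
  let ?P = "perm_mat m \<sigma> :: 'a mat"
  have sm: "\<And>i. i < m \<Longrightarrow> \<sigma> i < m" using permutes_in_image[OF s] by auto
  have inj: "inj \<sigma>" using permutes_inj[OF s] .
  have P: "?P \<in> carrier_mat m m" unfolding perm_mat_def by auto
  have PT: "transpose_mat ?P \<in> carrier_mat m m" using P by auto
  have PTP: "transpose_mat ?P * ?P = 1\<^sub>m m"
  proof (rule eq_matI)
    fix i j assume ij: "i < dim_row (1\<^sub>m m :: 'a mat)" "j < dim_col (1\<^sub>m m :: 'a mat)"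
    then have "(transpose_mat ?P * ?P) $$ (i,j) = (\<Sum>l\<in>{0..<m}. transpose_mat ?P $$ (i,l) * ?P $$ (l,j))"
      using mult_index[OF PT P] by auto
    also have "\<dots> = transpose_mat ?P $$ (i,\<sigma> i) * ?P $$ (\<sigma> i,j)"
      using ij sm by (intro sum_single) (auto simp: perm_mat_def)
    also have "\<dots> = 1\<^sub>m m $$ (i,j)" using ij sm inj by (auto simp: perm_mat_def inj_eq)
    finally show "(transpose_mat ?P * ?P) $$ (i,j) = 1\<^sub>m m $$ (i,j)" .
  qed (use P in auto)
  have PPT: "?P * transpose_mat ?P = 1\<^sub>m m"
  proof (rule eq_matI)
    fix i j assume ij: "i < dim_row (1\<^sub>m m :: 'a mat)" "j < dim_col (1\<^sub>m m :: 'a mat)"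
    obtain a where a: "a < m" "\<sigma> a = i" using ij s
      by (metis index_one_mat(2) lessThan_iff permutes_def)
    then have "(?P * transpose_mat ?P) $$ (i,j) = (\<Sum>l\<in>{0..<m}. ?P $$ (i,l) * transpose_mat ?P $$ (l,j))"
      using mult_index[OF P PT] ij by auto
    also have "\<dots> = ?P $$ (i,a) * transpose_mat ?P $$ (a,j)"
      using ij a inj by (intro sum_single) (auto simp: perm_mat_def inj_eq)
    also have "\<dots> = 1\<^sub>m m $$ (i,j)" using ij a by (auto simp: perm_mat_def)
    finally show "(?P * transpose_mat ?P) $$ (i,j) = 1\<^sub>m m $$ (i,j)" .
  qed (use P in auto)
  have inv: "mat_inv ?P = transpose_mat ?P"
    by (rule mat_inv_eq[OF P]) (use PTP PPT P in \<open>auto simp: inverts_mat_def\<close>)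
  have TE: "transpose_mat ?P * E \<in> carrier_mat m m" using PT E by auto
  show "mat_inv ?P * E * ?P \<in> carrier_mat m m" unfolding inv using TE P by auto
  fix i j assume ij: "i < m" "j < m"
  have 1: "(transpose_mat ?P * E) $$ (i,l) = E $$ (\<sigma> i, l)" if "l < m" for l
  proof -
    have "(transpose_mat ?P * E) $$ (i,l) = (\<Sum>k\<in>{0..<m}. transpose_mat ?P $$ (i,k) * E $$ (k,l))"
      using mult_index[OF PT E] ij that by auto
    also have "\<dots> = transpose_mat ?P $$ (i,\<sigma> i) * E $$ (\<sigma> i,l)"
      using ij sm by (intro sum_single) (auto simp: perm_mat_def)
    finally show ?thesis using ij sm by (simp add: perm_mat_def)
  qed
  have "(transpose_mat ?P * E * ?P) $$ (i,j) = (\<Sum>l\<in>{0..<m}. (transpose_mat ?P * E) $$ (i,l) * ?P $$ (l,j))"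
    using mult_index[OF TE P] ij by auto
  also have "\<dots> = (transpose_mat ?P * E) $$ (i,\<sigma> j) * ?P $$ (\<sigma> j,j)"
    using ij sm by (intro sum_single) (auto simp: perm_mat_def)
  also have "\<dots> = E $$ (\<sigma> i, \<sigma> j)" using 1 ij sm by (simp add: perm_mat_def)
  finally show "(mat_inv ?P * E * ?P) $$ (i,j) = E $$ (\<sigma> i, \<sigma> j)" unfolding inv .
qed


lemma aj_pp:
  fixes E :: "'a::field mat"
  assumes E: "E \<in> carrier_mat m m" and aj: "almost_jordan E"
  shows "pp E"
proof -
  obtain \<sigma> where s: "\<sigma> permutes {..<m}" and J: "jordan_diff (mat_inv (perm_mat m \<sigma> :: 'a mat) * E * perm_mat m \<sigma>)"
    using aj E unfolding almost_jordan_def Let_def by auto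
  let ?J = "mat_inv (perm_mat m \<sigma> :: 'a mat) * E * perm_mat m \<sigma>"
  obtain bs where bs: "set bs \<subseteq> {0\<^sub>m 1 1, jblock2}" "?J = diag_block_mat bs"
    using J unfolding jordan_diff_def by blast
  have ppJ: "pp ?J" unfolding bs(2) by (rule pp_diag[OF bs(1)])
  have Jc: "?J \<in> carrier_mat m m" using perm_facts(1)[OF s E] .
  have Jx: "\<And>i j. i < m \<Longrightarrow> j < m \<Longrightarrow> ?J $$ (i,j) = E $$ (\<sigma> i, \<sigma> j)" using perm_facts(2)[OF s E] .
  obtain J where ppJ: "pp J" and Jc: "J \<in> carrier_mat m m" and Jx: "\<And>i j. i < m \<Longrightarrow> j < m \<Longrightarrow> J $$ (i,j) = E $$ (\<sigma> i, \<sigma> j)"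
    using ppJ Jc Jx by (rule that)
  define tt where "tt = Hilbert_Choice.inv \<sigma>"
  have t: "tt permutes {..<m}" unfolding tt_def using permutes_inv[OF s] .
  have tm: "\<And>a. a < m \<Longrightarrow> tt a < m" using permutes_in_image[OF t] by auto
  have st: "\<And>a. \<sigma> (tt a) = a" unfolding tt_def using permutes_inverses(1)[OF s] by auto
  have tinj: "\<And>a b. tt a = tt b \<Longrightarrow> a = b" using st by metis
  have Ex: "\<And>a b. a < m \<Longrightarrow> b < m \<Longrightarrow> E $$ (a,b) = J $$ (tt a, tt b)" using Jx tm st by simp
  have p1: "\<And>i j. i < m \<Longrightarrow> j < m \<Longrightarrow> J $$ (i,j) = 0 \<or> J $$ (i,j) = 1"
    and p2: "\<And>i j j'. i < m \<Longrightarrow> j < m \<Longrightarrow> j' < m \<Longrightarrow> J $$ (i,j) \<noteq> 0 \<Longrightarrow> J $$ (i,j') \<noteq> 0 \<Longrightarrow> j = j'"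
    and p3: "\<And>i i' j. i < m \<Longrightarrow> i' < m \<Longrightarrow> j < m \<Longrightarrow> J $$ (i,j) \<noteq> 0 \<Longrightarrow> J $$ (i',j) \<noteq> 0 \<Longrightarrow> i = i'"
    using ppJ Jc unfolding pp_def by auto
  have dE: "dim_row E = m" "dim_col E = m" using E by auto
  show ?thesis unfolding pp_def dE
  proof (intro conjI allI impI)
    fix i j assume h: "i < m" "j < m"
    show "E $$ (i,j) = 0 \<or> E $$ (i,j) = 1" unfolding Ex[OF h] using p1 tm h by blast
  next
    fix i j j' assume h: "i < m" "j < m" "j' < m" "E $$ (i,j) \<noteq> 0" "E $$ (i,j') \<noteq> 0"
    have "tt j = tt j'" using p2[of "tt i" "tt j" "tt j'"] h Ex[OF h(1,2)] Ex[OF h(1,3)] tm by simp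
    then show "j = j'" by (rule tinj)
  next
    fix i i' j assume h: "i < m" "i' < m" "j < m" "E $$ (i,j) \<noteq> 0" "E $$ (i',j) \<noteq> 0"
    have "tt i = tt i'" using p3[of "tt i" "tt i'" "tt j"] h Ex[OF h(1,3)] Ex[OF h(2,3)] tm by simp
    then show "i = i'" by (rule tinj)
  qed
qed

lemma comb:
  fixes S1 S2 :: "(nat \<times> nat) set"
  assumes f1: "finite S1" and f2: "finite S2" and i1: "inj_on snd S1" and i2: "inj_on fst S2"
    and g: "\<forall>x\<in>S1. \<exists>y\<in>S2. snd y = snd x \<and> fst x \<le> fst y"
    and h: "\<forall>y\<in>S2. \<exists>x\<in>S1. fst x = fst y \<and> snd x \<le> snd y"
  shows "S1 = S2"
proof -
  obtain g where g: "\<And>x. x \<in> S1 \<Longrightarrow> g x \<in> S2 \<and> snd (g x) = snd x \<and> fst x \<le> fst (g x)"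
    using g by metis
  obtain h where h: "\<And>y. y \<in> S2 \<Longrightarrow> h y \<in> S1 \<and> fst (h y) = fst y \<and> snd (h y) \<le> snd y"
    using h by metis
  have ig: "inj_on g S1"
  proof (rule inj_onI)
    fix x x' assume "x \<in> S1" "x' \<in> S1" "g x = g x'"
    then show "x = x'" using g i1 by (metis inj_on_eq_iff)
  qed
  have ih: "inj_on h S2"
  proof (rule inj_onI)
    fix x x' assume "x \<in> S2" "x' \<in> S2" "h x = h x'"
    then show "x = x'" using h i2 by (metis inj_on_eq_iff)
  qed
  have gs: "g ` S1 \<subseteq> S2" using g by auto
  have hs: "h ` S2 \<subseteq> S1" using h by auto
  have c1: "card S1 \<le> card S2" by (rule card_inj_on_le[OF ig gs f2])
  have c2: "card S2 \<le> card S1" by (rule card_inj_on_le[OF ih hs f1])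
  have gS: "g ` S1 = S2"
    by (rule card_subset_eq[OF f2 gs]) (use c1 c2 card_image[OF ig] in simp)
  have hS: "h ` S2 = S1"
    by (rule card_subset_eq[OF f1 hs]) (use c1 c2 card_image[OF ih] in simp)
  have "sum fst S2 = sum (fst \<circ> g) S1" using sum.reindex[OF ig, of fst] gS by simp
  moreover have "sum fst S1 = sum (fst \<circ> h) S2" using sum.reindex[OF ih, of fst] hS by simp
  moreover have "sum (fst \<circ> h) S2 = sum fst S2" using h by (intro sum.cong) auto
  ultimately have eq: "sum (fst \<circ> g) S1 = sum fst S1" by simp
  have fix_g: "g x = x" if x: "x \<in> S1" for x
  proof -
    have "fst (g x) = fst x"
    proof (rule ccontr)
      assume "fst (g x) \<noteq> fst x"
      then have "fst x < fst (g x)" using g[OF x] by auto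
      then have "sum fst S1 < sum (fst \<circ> g) S1"
        using g x by (intro sum_strict_mono_ex1[OF f1]) auto
      then show False using eq by simp
    qed
    then show ?thesis using g[OF x] by (simp add: prod_eq_iff)
  qed
  show ?thesis using gS fix_g by (metis image_cong image_ident)
qed


lemma inv_obtain:
  fixes B :: "'a::field mat"
  assumes B: "B \<in> carrier_mat m m" and inv: "invertible_mat B"
  obtains X where "X \<in> carrier_mat m m" "B * X = 1\<^sub>m m" "X * B = 1\<^sub>m m" "mat_inv B = X"
proof -
  obtain X where ab: "inverts_mat B X" and ba: "inverts_mat X B" using inv unfolding invertible_mat_def by blast
  have 1: "B * X = 1\<^sub>m m" using ab B unfolding inverts_mat_def by simp
  have 2: "X * B = 1\<^sub>m (dim_row X)" using ba unfolding inverts_mat_def .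
  have "dim_col X = m" using arg_cong[OF 1, of dim_col] by simp
  moreover have "dim_row X = m" using arg_cong[OF 2, of dim_col] B by simp
  ultimately have X: "X \<in> carrier_mat m m" by auto
  show ?thesis
    by (rule that[OF X 1]) (use 2 X mat_inv_eq[OF B ab ba] in auto)
qed

lemma ut_diag_nz:
  fixes B :: "'a::field mat"
  assumes B: "B \<in> carrier_mat m m" and ut: "upper_triangular B" and inv: "invertible_mat B" and a: "a < m"
  shows "B $$ (a,a) \<noteq> 0"
proof -
  obtain X where X: "X \<in> carrier_mat m m" "B * X = 1\<^sub>m m" using inv_obtain[OF B inv] by metis
  have "det B * det X = 1" using det_mult[OF B X(1)] X(2) det_one by metis
  then have "det B \<noteq> 0" by auto
  then have "0 \<notin> set (diag_mat B)" using det_upper_triangular[OF ut B] prod_list_zero_iff by metis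
  moreover have "B $$ (a,a) \<in> set (diag_mat B)" using a B unfolding diag_mat_def by auto
  ultimately show ?thesis by metis
qed

lemma inv_ut:
  fixes B X :: "'a::field mat"
  assumes B: "B \<in> carrier_mat m m" and X: "X \<in> carrier_mat m m" and XB: "X * B = 1\<^sub>m m"
    and ut: "upper_triangular B" and dnz: "\<And>a. a < m \<Longrightarrow> B $$ (a,a) \<noteq> 0"
  shows "upper_triangular X"
proof -
  have "\<forall>j. j < i \<longrightarrow> X $$ (i,j) = 0" if i: "i < m" for i
  proof (intro allI)
    fix j show "j < i \<longrightarrow> X $$ (i,j) = 0"
    proof (induction j rule: less_induct)
      case (less j)
      show ?case
      proof
        assume ji: "j < i"
        have "0 = (X * B) $$ (i,j)" using XB i ji by simp
        also have "\<dots> = (\<Sum>l\<in>{0..<m}. X $$ (i,l) * B $$ (l,j))" using mult_index[OF X B] i ji by simp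
        also have "\<dots> = X $$ (i,j) * B $$ (j,j)"
        proof (rule sum_single)
          fix k assume k: "k \<in> {0..<m}" "k \<noteq> j"
          show "X $$ (i,k) * B $$ (k,j) = 0"
          proof (cases "k < j")
            case True then show ?thesis using less ji by auto
          next
            case False then have "j < k" using k by auto
            then show ?thesis using ut k B unfolding upper_triangular_def by auto
          qed
        qed (use i ji in auto)
        finally show "X $$ (i,j) = 0" using dnz[of j] i ji by auto
      qed
    qed
  qed
  then show ?thesis unfolding upper_triangular_def using X by auto
qed


lemma key:
  fixes E1 E2 C :: "'a::field mat"
  assumes E1: "E1 \<in> carrier_mat m m" and E2: "E2 \<in> carrier_mat m m" and C: "C \<in> carrier_mat m m"
    and p1: "pp E1" and p2: "pp E2" and ut: "upper_triangular C"
    and dnz: "\<And>a. a < m \<Longrightarrow> C $$ (a,a) \<noteq> 0" and comm: "E1 * C = C * E2"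
  shows "E1 = E2"
proof -
  have r1: "\<And>i j. i < m \<Longrightarrow> j < m \<Longrightarrow> E1 $$ (i,j) = 0 \<or> E1 $$ (i,j) = 1"
    and u1: "\<And>i j j'. i < m \<Longrightarrow> j < m \<Longrightarrow> j' < m \<Longrightarrow> E1 $$ (i,j) \<noteq> 0 \<Longrightarrow> E1 $$ (i,j') \<noteq> 0 \<Longrightarrow> j = j'"
    and v1: "\<And>i i' j. i < m \<Longrightarrow> i' < m \<Longrightarrow> j < m \<Longrightarrow> E1 $$ (i,j) \<noteq> 0 \<Longrightarrow> E1 $$ (i',j) \<noteq> 0 \<Longrightarrow> i = i'"
    using p1 E1 unfolding pp_def by auto
  have r2: "\<And>i j. i < m \<Longrightarrow> j < m \<Longrightarrow> E2 $$ (i,j) = 0 \<or> E2 $$ (i,j) = 1"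
    and u2: "\<And>i j j'. i < m \<Longrightarrow> j < m \<Longrightarrow> j' < m \<Longrightarrow> E2 $$ (i,j) \<noteq> 0 \<Longrightarrow> E2 $$ (i,j') \<noteq> 0 \<Longrightarrow> j = j'"
    and v2: "\<And>i i' j. i < m \<Longrightarrow> i' < m \<Longrightarrow> j < m \<Longrightarrow> E2 $$ (i,j) \<noteq> 0 \<Longrightarrow> E2 $$ (i',j) \<noteq> 0 \<Longrightarrow> i = i'"
    using p2 E2 unfolding pp_def by auto
  have utC: "\<And>i k. i < m \<Longrightarrow> k < i \<Longrightarrow> C $$ (i,k) = 0" using ut C unfolding upper_triangular_def by auto
  define M where "M = E1 * C"
  have M1: "M $$ (i,j) = (\<Sum>l\<in>{0..<m}. E1 $$ (i,l) * C $$ (l,j))" if "i < m" "j < m" for i j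
    unfolding M_def using mult_index[OF E1 C] that by simp
  have M2: "M $$ (i,j) = (\<Sum>l\<in>{0..<m}. C $$ (i,l) * E2 $$ (l,j))" if "i < m" "j < m" for i j
    unfolding M_def comm using mult_index[OF C E2] that by simp
  have A1: "M $$ (i,a) \<noteq> 0" if h: "i < m" "a < m" "E1 $$ (i,a) \<noteq> 0" for i a
  proof -
    have "M $$ (i,a) = E1 $$ (i,a) * C $$ (a,a)" unfolding M1[OF h(1,2)]
      by (rule sum_single) (use h u1 in auto)
    then show ?thesis using h dnz by auto
  qed
  have A2: "M $$ (c,j) \<noteq> 0" if h: "c < m" "j < m" "E2 $$ (c,j) \<noteq> 0" for c j
  proof -
    have "M $$ (c,j) = C $$ (c,c) * E2 $$ (c,j)" unfolding M2[OF h(1,2)]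
      by (rule sum_single) (use h v2 in auto)
    then show ?thesis using h dnz by auto
  qed
  have B2: "\<exists>c<m. E2 $$ (c,j) \<noteq> 0 \<and> i \<le> c" if h: "i < m" "j < m" "M $$ (i,j) \<noteq> 0" for i j
  proof -
    from h(3)[unfolded M2[OF h(1,2)]] obtain k where k: "k \<in> {0..<m}" "C $$ (i,k) * E2 $$ (k,j) \<noteq> 0"
      by (rule sum.not_neutral_contains_not_neutral)
    then have "\<not> k < i" using utC h by auto
    then show ?thesis using k by auto
  qed
  have B1: "\<exists>a<m. E1 $$ (i,a) \<noteq> 0 \<and> a \<le> j" if h: "i < m" "j < m" "M $$ (i,j) \<noteq> 0" for i j
  proof -
    from h(3)[unfolded M1[OF h(1,2)]] obtain k where k: "k \<in> {0..<m}" "E1 $$ (i,k) * C $$ (k,j) \<noteq> 0"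
      by (rule sum.not_neutral_contains_not_neutral)
    then have "\<not> j < k" using utC h by auto
    then show ?thesis using k by auto
  qed
  define S1 where "S1 = {x \<in> {0..<m} \<times> {0..<m}. E1 $$ x \<noteq> 0}"
  define S2 where "S2 = {x \<in> {0..<m} \<times> {0..<m}. E2 $$ x \<noteq> 0}"
  have "S1 = S2"
  proof (rule comb)
    show "finite S1" unfolding S1_def by auto
    show "finite S2" unfolding S2_def by auto
    show "inj_on snd S1" unfolding S1_def by (rule inj_onI) (use v1 in auto)
    show "inj_on fst S2" unfolding S2_def by (rule inj_onI) (use u2 in auto)
    show "\<forall>x\<in>S1. \<exists>y\<in>S2. snd y = snd x \<and> fst x \<le> fst y"
    proof
      fix x assume "x \<in> S1"
      then obtain i a where x: "x = (i,a)" "i < m" "a < m" "E1 $$ (i,a) \<noteq> 0" unfolding S1_def by auto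
      obtain c where "c < m" "E2 $$ (c,a) \<noteq> 0" "i \<le> c" using B2[OF x(2,3) A1[OF x(2-4)]] by blast
      then show "\<exists>y\<in>S2. snd y = snd x \<and> fst x \<le> fst y" using x unfolding S2_def
        by (intro bexI[of _ "(c,a)"]) auto
    qed
    show "\<forall>y\<in>S2. \<exists>x\<in>S1. fst x = fst y \<and> snd x \<le> snd y"
    proof
      fix y assume "y \<in> S2"
      then obtain c j where y: "y = (c,j)" "c < m" "j < m" "E2 $$ (c,j) \<noteq> 0" unfolding S2_def by auto
      obtain a where "a < m" "E1 $$ (c,a) \<noteq> 0" "a \<le> j" using B1[OF y(2,3) A2[OF y(2-4)]] by blast
      then show "\<exists>x\<in>S1. fst x = fst y \<and> snd x \<le> snd y" using y unfolding S1_def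
        by (intro bexI[of _ "(c,a)"]) auto
    qed
  qed
  show ?thesis
  proof (rule eq_matI)
    fix i j assume "i < dim_row E2" "j < dim_col E2"
    then have h: "i < m" "j < m" using E2 by auto
    have "E1 $$ (i,j) \<noteq> 0 \<longleftrightarrow> E2 $$ (i,j) \<noteq> 0"
      using \<open>S1 = S2\<close> h unfolding S1_def S2_def by (auto simp: set_eq_iff)
    then show "E1 $$ (i,j) = E2 $$ (i,j)" using r1[OF h] r2[OF h] by auto
  qed (use E1 E2 in auto)
qed


theorem corollaryA3:
  fixes D B1 B2 :: "'a::field mat"
  assumes "D \<in> carrier_mat m m" "B1 \<in> carrier_mat m m" "B2 \<in> carrier_mat m m"
    and "differential_mat D"
    and "triangular_mat B1" "triangular_mat B2"
    and "almost_jordan (mat_inv B1 * D * B1)"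
    and "almost_jordan (mat_inv B2 * D * B2)"
  shows "mat_inv B1 * D * B1 = mat_inv B2 * D * B2"
proof -
  note D = assms(1) and B1 = assms(2) and B2 = assms(3)
  have ut1: "upper_triangular B1" "invertible_mat B1" using assms(5) unfolding triangular_mat_def by auto
  have ut2: "upper_triangular B2" "invertible_mat B2" using assms(6) unfolding triangular_mat_def by auto
  obtain X1 where X1: "X1 \<in> carrier_mat m m" "B1 * X1 = 1\<^sub>m m" "X1 * B1 = 1\<^sub>m m" "mat_inv B1 = X1"
    using inv_obtain[OF B1 ut1(2)] by metis
  obtain X2 where X2: "X2 \<in> carrier_mat m m" "B2 * X2 = 1\<^sub>m m" "X2 * B2 = 1\<^sub>m m" "mat_inv B2 = X2"
    using inv_obtain[OF B2 ut2(2)] by metis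
  define C where "C = X1 * B2"
  have Cc: "C \<in> carrier_mat m m" unfolding C_def using X1 B2 by auto
  have d1: "\<And>a. a < m \<Longrightarrow> B1 $$ (a,a) \<noteq> 0" using ut_diag_nz[OF B1 ut1] .
  have d2: "\<And>a. a < m \<Longrightarrow> B2 $$ (a,a) \<noteq> 0" using ut_diag_nz[OF B2 ut2] .
  have utX1: "upper_triangular X1" using inv_ut[OF B1 X1(1) X1(3) ut1(1) d1] .
  have utX1': "\<And>i k. i < m \<Longrightarrow> k < i \<Longrightarrow> X1 $$ (i,k) = 0" using utX1 X1 unfolding upper_triangular_def by auto
  have utB1': "\<And>i k. i < m \<Longrightarrow> k < i \<Longrightarrow> B1 $$ (i,k) = 0" using ut1 B1 unfolding upper_triangular_def by auto
  have utB2': "\<And>i k. i < m \<Longrightarrow> k < i \<Longrightarrow> B2 $$ (i,k) = 0" using ut2 B2 unfolding upper_triangular_def by auto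
  have utC: "upper_triangular C"
    unfolding upper_triangular_def
  proof (intro allI impI)
    fix i j assume h: "i < dim_row C" "j < i"
    then have i: "i < m" using Cc by auto
    have "C $$ (i,j) = (\<Sum>l\<in>{0..<m}. X1 $$ (i,l) * B2 $$ (l,j))"
      unfolding C_def using mult_index[OF X1(1) B2] i h by simp
    also have "\<dots> = 0"
    proof (rule sum.neutral, intro ballI)
      fix l assume l: "l \<in> {0..<m}"
      show "X1 $$ (i,l) * B2 $$ (l,j) = 0"
      proof (cases "l < i")
        case True then show ?thesis using utX1' i by auto
      next
        case False then show ?thesis using utB2' l h by auto
      qed
    qed
    finally show "C $$ (i,j) = 0" .
  qed
  have dg: "X1 $$ (a,a) * B $$ (a,a) = (\<Sum>l\<in>{0..<m}. X1 $$ (a,l) * B $$ (l,a))"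
    if a: "a < m" and utB: "\<And>i k. i < m \<Longrightarrow> k < i \<Longrightarrow> B $$ (i,k) = 0" for a B
  proof (rule sum_single[symmetric])
    fix k assume k: "k \<in> {0..<m}" "k \<noteq> a"
    show "X1 $$ (a,k) * B $$ (k,a) = 0"
    proof (cases "k < a")
      case True then show ?thesis using utX1' a by auto
    next
      case False then have "a < k" using k by auto
      then show ?thesis using utB k by auto
    qed
  qed (use a in auto)
  have dC: "C $$ (a,a) \<noteq> 0" if a: "a < m" for a
  proof -
    have "X1 $$ (a,a) * B1 $$ (a,a) = (X1 * B1) $$ (a,a)"
      using dg[OF a utB1'] mult_index[OF X1(1) B1] a by simp
    then have "X1 $$ (a,a) * B1 $$ (a,a) = 1" using X1(3) a by simp
    then have "X1 $$ (a,a) \<noteq> 0" by auto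
    moreover have "C $$ (a,a) = X1 $$ (a,a) * B2 $$ (a,a)"
      unfolding C_def using dg[OF a utB2'] mult_index[OF X1(1) B2] a by simp
    ultimately show ?thesis using d2 a by auto
  qed
  let ?E1 = "X1 * D * B1" and ?E2 = "X2 * D * B2"
  have E1c: "?E1 \<in> carrier_mat m m" using X1 D B1 by auto
  have E2c: "?E2 \<in> carrier_mat m m" using X2 D B2 by auto
  have f1: "B1 * (X1 * B2) = B2"
    using assoc_mult_mat[OF B1 X1(1) B2, symmetric] X1(2) B2 by simp
  have f2: "B2 * (X2 * (D * B2)) = D * B2"
    using assoc_mult_mat[OF B2 X2(1), of "D * B2" m, symmetric] X2(2) D B2 by simp
  have e1: "?E1 * C = X1 * D * B2"
    unfolding C_def using X1 D B1 B2 f1 by (simp add: assoc_mult_mat[where n\<^sub>1=m and n\<^sub>2=m and n\<^sub>3=m and n\<^sub>4=m])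
  have e2: "C * ?E2 = X1 * D * B2"
    unfolding C_def using X1 X2 D B2 f2 by (simp add: assoc_mult_mat[where n\<^sub>1=m and n\<^sub>2=m and n\<^sub>3=m and n\<^sub>4=m])
  have pp1: "pp ?E1" using aj_pp[OF E1c] assms(7) X1(4) by simp
  have pp2: "pp ?E2" using aj_pp[OF E2c] assms(8) X2(4) by simp
  have cm: "?E1 * C = C * ?E2" using e1 e2 by simp
  have "?E1 = ?E2" using key[OF E1c E2c Cc pp1 pp2 utC dC cm] by simp
  then show ?thesis using X1(4) X2(4) by simp
qed

end
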